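(* Let $u$ be a parking sorted configuration on $K_{m,n}$ with $u_{a_m}\ge 0$, and let $r(u)=(r_1,\dots,r_n)$ be its $r$-vector. Write $u_{a_m}+1=nQ+R$ with $Q,R\in\mathbb N$ and $0\le R<n$. Then $$\mathrm{rank}(u)+1=\sum_{i=1}^n\max\{0,\;Q+\chi(i\le R)+r_i-1\},$$ where $\chi(\mathcal P)=1$ if the proposition $\mathcal P$ is true and $0$ otherwise.
   Context: Let $m,n\ge 1$. $K_{m,n}$ is the complete bipartite graph with vertex set $V=A_m\sqcup B_n$, $A_m=\{a_1,\dots,a_m\}$, $B_n=\{b_1,\dots,b_n\}$, with exactly one edge $\{a_i,b_j\}$ for every $i,j$; $a_m$ is the sink. A configuration is a function $u:V\to\mathbb Z$; $\mathrm{degree}(u)=\sum_c u_c$. For $c\in V$ with graph degree $d_c$ ($d_{a_i}=n$, $d_{b_j}=m$), $\Delta^{(c)}=d_c e_c-\sum_{c'\text{ adjacent to }c}e_{c'}$, with $e_c$ the indicator configuration of $c$; $\Delta^{(C)}=\sum_{c\in C}\Delta^{(c)}$. Toppling equivalence: difference is an integer combination of the $\Delta^{(c)}$. Effective: toppling equivalent to a non-negative configuration. $\mathrm{rank}(u)=-1+\min\{\mathrm{degree}(f): f\ge0,\ u-f\text{ not effective}\}$. A configuration $u$ is parking if $u_c\ge0$ for all $c\neq a_m$ and for every non-empty $C\subseteq V\setminus\{a_m\}$, $u-\Delta^{(C)}$ has a negative value at some vertex other than $a_m$. $u$ is sorted if $u_{a_1}\le\dots\le u_{a_{m-1}}$ and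 $u_{b_1}\le\dots\le u_{b_n}$ (no condition at the sink). For a configuration $u$ with $0\le u_{a_j}\le n-1$ ($j<m$) and $0\le u_{b_i}\le m-1$ that is sorted (in particular any parking sorted configuration), its $r$-vector is $r(u)=(r_1,\dots,r_n)$ with $r_i=u_{b_i}+1-\#\{j\in\{1,\dots,m-1\}: u_{a_j}+1\le i-1\}$; it does not depend on $u_{a_m}$. *)

theory Defs
  imports Main
begin

text \<open>Vertices of K_{m,n}: A i (i = 1..m) and B j (j = 1..n); A m is the sink.
Configurations are functions vert => int; only their values on the vertex set V matter.\<close>

datatype vert = A nat | B nat

definition Vset :: "nat \<Rightarrow> nat \<Rightarrow> vert set" where
  "Vset m n = A ` {1..m} \<union> B ` {1..n}"

definition adj :: "nat \<Rightarrow> nat \<Rightarrow> vert \<Rightarrow> vert \<Rightarrow> bool" where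
  "adj m n x y = (\<exists>i j. i \<in> {1..m} \<and> j \<in> {1..n} \<and>
      ((x = A i \<and> y = B j) \<or> (x = B j \<and> y = A i)))"

fun gdeg :: "nat \<Rightarrow> nat \<Rightarrow> vert \<Rightarrow> int" where
  "gdeg m n (A i) = int n"
| "gdeg m n (B j) = int m"

definition Delta :: "nat \<Rightarrow> nat \<Rightarrow> vert \<Rightarrow> vert \<Rightarrow> int" where
  "Delta m n c x = (if x = c then gdeg m n c else 0) - (if adj m n c x then 1 else 0)"

definition DeltaSet :: "nat \<Rightarrow> nat \<Rightarrow> vert set \<Rightarrow> vert \<Rightarrow> int" where
  "DeltaSet m n C x = (\<Sum>c\<in>C. Delta m n c x)"

definition degree :: "nat \<Rightarrow> nat \<Rightarrow> (vert \<Rightarrow> int) \<Rightarrow> int" where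
  "degree m n u = (\<Sum>c\<in>Vset m n. u c)"

definition toppling_equiv :: "nat \<Rightarrow> nat \<Rightarrow> (vert \<Rightarrow> int) \<Rightarrow> (vert \<Rightarrow> int) \<Rightarrow> bool" where
  "toppling_equiv m n u v = (\<exists>k :: vert \<Rightarrow> int. \<forall>x\<in>Vset m n.
      u x - v x = (\<Sum>c\<in>Vset m n. k c * Delta m n c x))"

definition effective :: "nat \<Rightarrow> nat \<Rightarrow> (vert \<Rightarrow> int) \<Rightarrow> bool" where
  "effective m n u = (\<exists>v. toppling_equiv m n u v \<and> (\<forall>x\<in>Vset m n. v x \<ge> 0))"

text \<open>rank(u) = -1 + min { degree f : f >= 0, u - f not effective }.
Degrees of non-negative f are natural numbers, so the minimum is taken as LEAST over nat.\<close>
definition rank :: "nat \<Rightarrow> nat \<Rightarrow> (vert \<Rightarrow> int) \<Rightarrow> int" where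
  "rank m n u = int (LEAST d :: nat. \<exists>f. (\<forall>x\<in>Vset m n. f x \<ge> 0) \<and> degree m n f = int d
       \<and> \<not> effective m n (\<lambda>x. u x - f x)) - 1"

definition parking :: "nat \<Rightarrow> nat \<Rightarrow> (vert \<Rightarrow> int) \<Rightarrow> bool" where
  "parking m n u = ((\<forall>c\<in>Vset m n - {A m}. u c \<ge> 0) \<and>
     (\<forall>C. C \<subseteq> Vset m n - {A m} \<and> C \<noteq> {} \<longrightarrow>
        (\<exists>x\<in>Vset m n - {A m}. u x - DeltaSet m n C x < 0)))"

definition sorted_conf :: "nat \<Rightarrow> nat \<Rightarrow> (vert \<Rightarrow> int) \<Rightarrow> bool" where
  "sorted_conf m n u = ((\<forall>i j. 1 \<le> i \<and> i \<le> j \<and> j \<le> m - 1 \<longrightarrow> u (A i) \<le> u (A j)) \<and>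
     (\<forall>i j. 1 \<le> i \<and> i \<le> j \<and> j \<le> n \<longrightarrow> u (B i) \<le> u (B j)))"

definition rvec :: "nat \<Rightarrow> nat \<Rightarrow> (vert \<Rightarrow> int) \<Rightarrow> nat \<Rightarrow> int" where
  "rvec m n u i = u (B i) + 1 - int (card {j \<in> {1..m-1}. u (A j) + 1 \<le> int i - 1})"

end

theory Submission
  imports Defs
begin



lemma sum_V:
  "(\<Sum>c\<in>Vset m n. F c) = (\<Sum>i=1..m. F (A i)) + (\<Sum>j=1..n. F (B j))"
proof -
  have "(\<Sum>c\<in>Vset m n. F c) = sum F (A ` {1..m}) + sum F (B ` {1..n})"
    unfolding Vset_def by (rule sum.union_disjoint) auto
  also have "sum F (A ` {1..m}) = (\<Sum>i=1..m. F (A i))"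
    by (subst sum.reindex) (auto simp: inj_on_def)
  also have "sum F (B ` {1..n}) = (\<Sum>j=1..n. F (B j))"
    by (subst sum.reindex) (auto simp: inj_on_def)
  finally show ?thesis .
qed

lemma lap_A:
  assumes "i \<in> {1..m}"
  shows "(\<Sum>c\<in>Vset m n. k c * Delta m n c (A i)) = int n * k (A i) - (\<Sum>j=1..n. k (B j))"
proof -
  have 1: "(\<Sum>i'=1..m. k (A i') * Delta m n (A i') (A i)) = (\<Sum>i'=1..m. if i' = i then k (A i) * int n else 0)"
    by (rule sum.cong) (auto simp: Delta_def adj_def)
  have 2: "(\<Sum>j=1..n. k (B j) * Delta m n (B j) (A i)) = (\<Sum>j=1..n. - k (B j))"
    using assms by (intro sum.cong) (auto simp: Delta_def adj_def)
  show ?thesis unfolding sum_V 1 2 using assms by (simp add: sum_negf)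
qed

lemma lap_B:
  assumes "j \<in> {1..n}"
  shows "(\<Sum>c\<in>Vset m n. k c * Delta m n c (B j)) = int m * k (B j) - (\<Sum>i=1..m. k (A i))"
proof -
  have 1: "(\<Sum>j'=1..n. k (B j') * Delta m n (B j') (B j)) = (\<Sum>j'=1..n. if j' = j then k (B j) * int m else 0)"
    by (rule sum.cong) (auto simp: Delta_def adj_def)
  have 2: "(\<Sum>i=1..m. k (A i) * Delta m n (A i) (B j)) = (\<Sum>i=1..m. - k (A i))"
    using assms by (intro sum.cong) (auto simp: Delta_def adj_def)
  show ?thesis unfolding sum_V 1 2 using assms by (simp add: sum_negf)
qed

lemma le_div_int: "0 < (d::int) \<Longrightarrow> d * a \<le> b \<Longrightarrow> a \<le> b div d"
  using zdiv_mono1[of "d*a" b d] by simp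

definition FA :: "nat \<Rightarrow> nat \<Rightarrow> (vert \<Rightarrow> int) \<Rightarrow> int \<Rightarrow> int" where
  "FA m n g y = (\<Sum>i=1..m. (g (A i) + y) div int n)"
definition Gh :: "nat \<Rightarrow> nat \<Rightarrow> (nat \<Rightarrow> int) \<Rightarrow> int \<Rightarrow> int" where
  "Gh m n h x = (\<Sum>j=1..n. (h j + x) div int m)"

lemma sum_last: "1 \<le> (m::nat) \<Longrightarrow> (\<Sum>i=1..m. F i) = (\<Sum>i=1..m-1. F i) + (F m :: int)"
  by (cases m) (auto simp: sum.cl_ivl_Suc)

lemma eff_imp:
  assumes "effective m n g" "m \<ge> 1" "n \<ge> 1"
  shows "\<exists>x y. x \<le> FA m n g y \<and> y \<le> Gh m n (\<lambda>j. g (B j)) x"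
proof -
  obtain v k where eq: "\<forall>x\<in>Vset m n. g x - v x = (\<Sum>c\<in>Vset m n. k c * Delta m n c x)"
    and nn: "\<forall>x\<in>Vset m n. v x \<ge> 0"
    using assms unfolding effective_def toppling_equiv_def by blast
  define x where "x = (\<Sum>i=1..m. k (A i))"
  define y where "y = (\<Sum>j=1..n. k (B j))"
  have a: "k (A i) \<le> (g (A i) + y) div int n" if "i \<in> {1..m}" for i
  proof -
    have v: "A i \<in> Vset m n" using that by (simp add: Vset_def)
    have "g (A i) - v (A i) = int n * k (A i) - y"
      using eq v lap_A[OF that, where n=n and k=k] by (simp add: y_def)
    with nn v have "int n * k (A i) \<le> g (A i) + y" by force
    then show ?thesis using le_div_int[of "int n"] assms by simp
  qed
  have b: "k (B j) \<le> (g (B j) + x) div int m" if "j \<in> {1..n}" for j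
  proof -
    have v: "B j \<in> Vset m n" using that by (simp add: Vset_def)
    have "g (B j) - v (B j) = int m * k (B j) - x"
      using eq v lap_B[OF that, where m=m and k=k] by (simp add: x_def)
    with nn v have "int m * k (B j) \<le> g (B j) + x" by force
    then show ?thesis using le_div_int[of "int m"] assms by simp
  qed
  have "x \<le> FA m n g y" unfolding x_def FA_def by (rule sum_mono) (use a in auto)
  moreover have "y \<le> Gh m n (\<lambda>j. g (B j)) x" unfolding y_def Gh_def by (rule sum_mono) (use b in auto)
  ultimately show ?thesis by blast
qed

lemma imp_eff:
  assumes "m \<ge> 1" "n \<ge> 1" "x \<le> FA m n g y" "y \<le> Gh m n (\<lambda>j. g (B j)) x"
  shows "effective m n g"
proof -
  define k where "k = (\<lambda>z. case z of
     A i \<Rightarrow> (if i = m then x - (\<Sum>i'=1..m-1. (g (A i') + y) div int n) else (g (A i) + y) div int n)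
   | B j \<Rightarrow> (if j = n then y - (\<Sum>j'=1..n-1. (g (B j') + x) div int m) else (g (B j) + x) div int m))"
  have sA: "(\<Sum>i=1..m. k (A i)) = x"
  proof -
    have "(\<Sum>i=1..m. k (A i)) = (\<Sum>i=1..m-1. k (A i)) + k (A m)" using sum_last assms by blast
    also have "(\<Sum>i=1..m-1. k (A i)) = (\<Sum>i'=1..m-1. (g (A i') + y) div int n)"
      by (rule sum.cong) (auto simp: k_def)
    finally show ?thesis by (simp add: k_def)
  qed
  have sB: "(\<Sum>j=1..n. k (B j)) = y"
  proof -
    have "(\<Sum>j=1..n. k (B j)) = (\<Sum>j=1..n-1. k (B j)) + k (B n)" using sum_last assms by blast
    also have "(\<Sum>j=1..n-1. k (B j)) = (\<Sum>j'=1..n-1. (g (B j') + x) div int m)"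
      by (rule sum.cong) (auto simp: k_def)
    finally show ?thesis by (simp add: k_def)
  qed
  have kA: "k (A i) \<le> (g (A i) + y) div int n" if "i \<in> {1..m}" for i
  proof (cases "i = m")
    case True
    have "x \<le> (\<Sum>i'=1..m-1. (g (A i') + y) div int n) + (g (A m) + y) div int n"
      using assms(3) sum_last[OF assms(1), of "\<lambda>i. (g (A i) + y) div int n"] by (simp add: FA_def)
    then show ?thesis using True by (simp add: k_def)
  qed (simp add: k_def)
  have kB: "k (B j) \<le> (g (B j) + x) div int m" if "j \<in> {1..n}" for j
  proof (cases "j = n")
    case True
    have "y \<le> (\<Sum>j'=1..n-1. (g (B j') + x) div int m) + (g (B n) + x) div int m"
      using assms(4) sum_last[OF assms(2), of "\<lambda>j. (g (B j) + x) div int m"] by (simp add: Gh_def)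
    then show ?thesis using True by (simp add: k_def)
  qed (simp add: k_def)
  define v where "v = (\<lambda>z. g z - (\<Sum>c\<in>Vset m n. k c * Delta m n c z))"
  have "toppling_equiv m n g v" unfolding toppling_equiv_def v_def by auto
  moreover have "\<forall>z\<in>Vset m n. v z \<ge> 0"
  proof
    fix z assume z: "z \<in> Vset m n"
    then consider (a) i where "z = A i" "i \<in> {1..m}" | (b) j where "z = B j" "j \<in> {1..n}"
      unfolding Vset_def by auto
    then show "v z \<ge> 0"
    proof cases
      case a
      have "int n * k (A i) \<le> int n * ((g (A i) + y) div int n)"
        using kA[OF a(2)] by (simp add: mult_left_mono)
      also have "\<dots> \<le> g (A i) + y"
        by (metis add.commute add_0_right add_le_cancel_left mult.commute div_mult_mod_eq
            assms(2) of_nat_0_less_iff pos_mod_sign less_le_trans zero_less_one le_less)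
      finally show ?thesis using a lap_A[OF a(2), where n=n and k=k] sB by (simp add: v_def)
    next
      case b
      have "int m * k (B j) \<le> int m * ((g (B j) + x) div int m)"
        using kB[OF b(2)] by (simp add: mult_left_mono)
      also have "\<dots> \<le> g (B j) + x"
        by (metis add.commute add_0_right add_le_cancel_left mult.commute div_mult_mod_eq
            assms(1) of_nat_0_less_iff pos_mod_sign less_le_trans zero_less_one le_less)
      finally show ?thesis using b lap_B[OF b(2), where m=m and k=k] sA by (simp add: v_def)
    qed
  qed
  ultimately show ?thesis unfolding effective_def by blast
qed




lemma div_neg1:
  fixes z n :: int
  assumes "0 < n" "-n \<le> z" "z < 0"
  shows "z div n = -1"
proof -
  have "z div n = ((z + n) + (-1) * n) div n" by simp
  also have "\<dots> = (z + n) div n + (-1)" using assms(1) by (simp only: div_mult_self1)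
  also have "(z + n) div n = 0" using assms by (simp add: div_pos_pos_trivial)
  finally show ?thesis by simp
qed

lemma div_small1:
  fixes a w p n :: int
  assumes "0 \<le> a" "a < n" "0 \<le> w" "w < n"
  shows "(a + p*n - w) div n = p - (if a < w then 1 else 0)"
proof -
  have n: "n > 0" using assms by simp
  have "(a + p*n - w) div n = ((a - w) + p * n) div n"
    by (rule arg_cong[where f="\<lambda>t. t div n"]) simp
  also have "\<dots> = (a - w) div n + p" using n by simp
  finally have "(a + p*n - w) div n = (a - w) div n + p" .
  moreover have "(a - w) div n = (if a < w then -1 else 0)"
  proof (cases "a < w")
    case True
    then show ?thesis using assms by (simp add: div_neg1)
  next
    case False
    then show ?thesis using assms by (simp add: div_pos_pos_trivial)
  qed
  ultimately show ?thesis by simp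
qed

lemma div_sink:
  fixes s w p n Q R :: int
  assumes "s + 1 = n * Q + R" "0 \<le> R" "R < n" "0 \<le> w" "w < n"
  shows "(s + p*n - w) div n = p + Q - (if R \<le> w then 1 else 0)"
proof -
  have n: "n > 0" using assms by simp
  have "(s + p*n - w) div n = ((R - 1 - w) + (p + Q) * n) div n"
    by (rule arg_cong[where f="\<lambda>t. t div n"]) (use assms(1) in \<open>simp add: algebra_simps\<close>)
  also have "\<dots> = (R - 1 - w) div n + (p + Q)" using n by simp
  finally have "(s + p*n - w) div n = (R - 1 - w) div n + (p + Q)" .
  moreover have "(R - 1 - w) div n = (if R \<le> w then -1 else 0)"
  proof (cases "R \<le> w")
    case True
    then show ?thesis using assms by (simp add: div_neg1)
  next
    case False
    then show ?thesis using assms by (simp add: div_pos_pos_trivial)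
  qed
  ultimately show ?thesis by simp
qed

lemma pred_div:
  fixes z m :: int
  assumes "m > 0"
  shows "(z - 1) div m = z div m - (if m dvd z then 1 else 0)"
proof -
  define q r where "q = z div m" and "r = z mod m"
  have z: "z = r + q * m" and r: "0 \<le> r" "r < m" using assms by (auto simp: q_def r_def)
  have dv: "m dvd z \<longleftrightarrow> r = 0" by (simp add: r_def dvd_eq_mod_eq_0)
  have zd: "z div m = q" by (simp add: q_def)
  show ?thesis
  proof (cases "r = 0")
    case True
    have "(z - 1) div m = ((m - 1) + (q - 1) * m) div m" using z True by (simp add: algebra_simps)
    also have "\<dots> = (m - 1) div m + (q - 1)" using assms by (simp only: div_mult_self1)
    also have "(m - 1) div m = 0" using assms by (simp add: div_pos_pos_trivial)
    finally show ?thesis using True dv zd by simp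
  next
    case False
    have "(z - 1) div m = ((r - 1) + q * m) div m" using z by (simp add: algebra_simps)
    also have "\<dots> = (r - 1) div m + q" using assms by simp
    also have "(r - 1) div m = 0" using r False by (simp add: div_pos_pos_trivial)
    finally show ?thesis using False dv zd by simp
  qed
qed




lemma sum_ind_card: "finite X \<Longrightarrow> (\<Sum>x\<in>X. if P x then (1::int) else 0) = int (card {x\<in>X. P x})"
  by (simp add: sum.inter_filter[symmetric])

lemma cnt_le: "w \<le> n \<Longrightarrow> (\<Sum>j=1..n. if j \<le> w then (1::int) else 0) = int w"
proof -
  assume "w \<le> n"
  then have "{j\<in>{1..n}. j \<le> w} = {1..w}" by auto
  then show ?thesis by (simp add: sum_ind_card)
qed

lemma Gh_mono: "m \<ge> 1 \<Longrightarrow> x \<le> x' \<Longrightarrow> Gh m n h x \<le> Gh m n h x'"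
  unfolding Gh_def by (rule sum_mono) (simp add: zdiv_mono1)

lemma Gh_period: "m \<ge> 1 \<Longrightarrow> Gh m n h (x + k * int m) = Gh m n h x + k * int n"
proof -
  assume m: "m \<ge> 1"
  have "Gh m n h (x + k * int m) = (\<Sum>j=1..n. (h j + x) div int m + k)"
    unfolding Gh_def
  proof (rule sum.cong)
    fix j
    have "(h j + (x + k * int m)) div int m = ((h j + x) + k * int m) div int m" by (simp add: algebra_simps)
    also have "\<dots> = k + (h j + x) div int m" using m by (simp only: div_mult_self1)
    finally show "(h j + (x + k * int m)) div int m = (h j + x) div int m + k" by simp
  qed simp
  also have "\<dots> = Gh m n h x + k * int n" by (simp add: Gh_def sum.distrib)
  finally show ?thesis .
qed

lemma Gh_pred:
  assumes "m \<ge> 1" "j \<in> {1..n}"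
  shows "Gh m n (h(j := h j - 1)) x = Gh m n h x - (if int m dvd (h j + x) then 1 else 0)"
proof -
  have "Gh m n (h(j := h j - 1)) x = (\<Sum>k=1..n. (h k + x) div int m - (if k = j then (if int m dvd (h j + x) then 1 else 0) else 0))"
    unfolding Gh_def
  proof (rule sum.cong)
    fix k assume "k \<in> {1..n}"
    show "((h(j := h j - 1)) k + x) div int m = (h k + x) div int m - (if k = j then (if int m dvd (h j + x) then 1 else 0) else 0)"
    proof (cases "k = j")
      case True
      have "(h j - 1 + x) div int m = ((h j + x) - 1) div int m" by (simp add: algebra_simps)
      then show ?thesis using True pred_div[of "int m" "h j + x"] assms(1) by simp
    qed simp
  qed simp
  also have "\<dots> = Gh m n h x - (if int m dvd (h j + x) then 1 else 0)"
    using assms(2) by (simp add: Gh_def sum_subtractf)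
  finally show ?thesis .
qed

lemma Gh_shift_le:
  assumes "m \<ge> 1" "\<forall>k\<in>{1..n}. h k - 1 \<le> h' k"
  shows "Gh m n h (x - 1) \<le> Gh m n h' x"
  unfolding Gh_def by (rule sum_mono) (use assms in \<open>auto intro!: zdiv_mono1\<close>)

locale bsetup =
  fixes m n :: nat and uB :: "nat \<Rightarrow> int"
  assumes m1: "m \<ge> 1"
    and bnd: "\<forall>j\<in>{1..n}. 0 \<le> uB j \<and> uB j \<le> int m - 1"
    and srt: "\<forall>i j. 1 \<le> i \<and> i \<le> j \<and> j \<le> n \<longrightarrow> uB i \<le> uB j"
begin

lemma base_bound:
  assumes "w < n"
  shows "Gh m n uB (- uB (w+1)) \<ge> - int w"
proof -
  have "(\<Sum>j=1..n. - (if j \<le> w then (1::int) else 0)) \<le> Gh m n uB (- uB (w+1))"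
    unfolding Gh_def
  proof (rule sum_mono)
    fix j assume j: "j \<in> {1..n}"
    show "- (if j \<le> w then 1 else 0) \<le> (uB j + - uB (w + 1)) div int m"
    proof (cases "j \<le> w")
      case True
      have "w + 1 \<in> {1..n}" using assms by simp
      then have "uB (w+1) \<le> int m - 1" "0 \<le> uB j" using bnd j by auto
      then have "- int m \<le> uB j + - uB (w+1)" by simp
      then have "(- int m) div int m \<le> (uB j + - uB (w+1)) div int m" using m1 by (simp add: zdiv_mono1)
      moreover have "(- int m) div int m = -1" using m1 by (simp add: div_neg1)
      ultimately show ?thesis using True by simp
    next
      case False
      then have "uB (w+1) \<le> uB j" using srt j by auto
      then show ?thesis using False m1 by (simp add: pos_imp_zdiv_nonneg_iff)
    qed
  qed
  moreover have "(\<Sum>j=1..n. - (if j \<le> w then (1::int) else 0)) = - int w"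
    using cnt_le[of w n] assms by (simp add: sum_negf)
  ultimately show ?thesis by simp
qed

lemma lemB:
  "\<forall>h xs. (\<forall>j\<in>{1..n}. h j \<le> uB j) \<longrightarrow> (\<Sum>j=1..n. nat (uB j - h j)) = N
     \<longrightarrow> (\<forall>w<n. Gh m n h (xs w) < - int w)
     \<longrightarrow> (\<Sum>w<n. max 0 (uB (w+1) + 1 + xs w)) \<le> (\<Sum>j=1..n. uB j - h j)"
proof (induction N)
  case 0
  show ?case
  proof (intro allI impI)
    fix h and xs :: "nat \<Rightarrow> int"
    assume le: "\<forall>j\<in>{1..n}. h j \<le> uB j" and s0: "(\<Sum>j=1..n. nat (uB j - h j)) = 0"
      and G: "\<forall>w<n. Gh m n h (xs w) < - int w"
    have eq: "\<forall>j\<in>{1..n}. h j = uB j" using s0 le by (auto intro: order.antisym)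
    have Geq: "Gh m n h x = Gh m n uB x" for x unfolding Gh_def by (rule sum.cong) (use eq in auto)
    have "max 0 (uB (w+1) + 1 + xs w) = 0" if "w < n" for w
    proof (rule ccontr)
      assume "max 0 (uB (w+1) + 1 + xs w) \<noteq> 0"
      then have "- uB (w+1) \<le> xs w" by simp
      then have "Gh m n uB (- uB (w+1)) \<le> Gh m n uB (xs w)" using Gh_mono m1 by blast
      with base_bound[OF that] G that Geq show False by force
    qed
    then have "(\<Sum>w<n. max 0 (uB (w+1) + 1 + xs w)) = 0" by simp
    moreover have "(\<Sum>j=1..n. uB j - h j) \<ge> 0" using le by (intro sum_nonneg) auto
    ultimately show "(\<Sum>w<n. max 0 (uB (w+1) + 1 + xs w)) \<le> (\<Sum>j=1..n. uB j - h j)" by simp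
  qed
next
  case (Suc N)
  show ?case
  proof (intro allI impI)
    fix h' and xs :: "nat \<Rightarrow> int"
    assume le: "\<forall>j\<in>{1..n}. h' j \<le> uB j" and sN: "(\<Sum>j=1..n. nat (uB j - h' j)) = Suc N"
      and G: "\<forall>w<n. Gh m n h' (xs w) < - int w"
    obtain j where j: "j \<in> {1..n}" "h' j < uB j"
    proof -
      have "\<not> (\<forall>j\<in>{1..n}. nat (uB j - h' j) = 0)"
      proof
        assume "\<forall>j\<in>{1..n}. nat (uB j - h' j) = 0"
        then have "(\<Sum>j=1..n. nat (uB j - h' j)) = 0" by simp
        with sN show False by simp
      qed
      then show ?thesis using that by force
    qed
    define h where "h = h'(j := h' j + 1)"
    have hh': "h' = h(j := h j - 1)" by (auto simp: h_def)
    have leh: "\<forall>k\<in>{1..n}. h k \<le> uB k" using le j by (auto simp: h_def)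
    have pw: "nat (uB k - h' k) = nat (uB k - h k) + (if k = j then 1 else 0)" for k
      using j by (auto simp: h_def)
    have "(\<Sum>k=1..n. nat (uB k - h' k)) = (\<Sum>k=1..n. nat (uB k - h k)) + (\<Sum>k=1..n. if k = j then 1 else 0)"
      unfolding pw by (simp add: sum.distrib)
    also have "(\<Sum>k=1..n. if k = j then 1 else (0::nat)) = 1" using j(1) by simp
    finally have sNh: "(\<Sum>k=1..n. nat (uB k - h k)) = N" using sN by simp
    have pw2: "uB k - h' k = (uB k - h k) + (if k = j then 1 else 0)" for k
      by (auto simp: h_def)
    have sumd: "(\<Sum>k=1..n. uB k - h' k) = (\<Sum>k=1..n. uB k - h k) + 1"
      unfolding pw2 using j(1) by (simp add: sum.distrib)
    define xs' where "xs' w = (if Gh m n h (xs w) < - int w then xs w else xs w - 1)" for w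
    have G': "\<forall>w<n. Gh m n h (xs' w) < - int w"
    proof (intro allI impI)
      fix w assume w: "w < n"
      show "Gh m n h (xs' w) < - int w"
      proof (cases "Gh m n h (xs w) < - int w")
        case True then show ?thesis by (simp add: xs'_def)
      next
        case False
        have "Gh m n h (xs w - 1) \<le> Gh m n h' (xs w)"
          by (rule Gh_shift_le[OF m1]) (auto simp: h_def)
        moreover have "Gh m n h' (xs w) < - int w" using G w by blast
        ultimately show ?thesis using False by (simp add: xs'_def)
      qed
    qed
    have IH: "(\<Sum>w<n. max 0 (uB (w+1) + 1 + xs' w)) \<le> (\<Sum>k=1..n. uB k - h k)"
      using Suc.IH leh sNh G' by blast
    define W where "W = {w\<in>{..<n}. \<not> Gh m n h (xs w) < - int w}"
    have Wprop: "Gh m n h (xs w) = - int w \<and> int m dvd (h j + xs w)" if "w \<in> W" for w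
    proof -
      have w: "w < n" "Gh m n h (xs w) \<ge> - int w" using that by (auto simp: W_def)
      have "Gh m n h' (xs w) = Gh m n h (xs w) - (if int m dvd (h j + xs w) then 1 else 0)"
        unfolding hh' using Gh_pred[OF m1 j(1)] by blast
      with G w show ?thesis by (auto split: if_splits)
    qed
    have cW: "card W \<le> 1"
    proof -
      have "w1 = w2" if "w1 \<in> W" "w2 \<in> W" for w1 w2
      proof -
        have a: "Gh m n h (xs w1) = - int w1" "int m dvd (h j + xs w1)" using Wprop[OF that(1)] by auto
        have b: "Gh m n h (xs w2) = - int w2" "int m dvd (h j + xs w2)" using Wprop[OF that(2)] by auto
        have "int m dvd (xs w2 - xs w1)" using a(2) b(2) dvd_diff by fastforce
        then obtain k where k: "xs w2 - xs w1 = int m * k" by (auto elim: dvdE)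
        have "xs w2 = xs w1 + k * int m" using k by (simp add: algebra_simps)
        then have "Gh m n h (xs w2) = Gh m n h (xs w1) + k * int n" using Gh_period[OF m1] by simp
        then have kn: "k * int n = int w1 - int w2" using a b by simp
        have ww: "w1 < n" "w2 < n" using that by (auto simp: W_def)
        have "k = 0"
        proof (rule ccontr)
          assume "k \<noteq> 0"
          then have "k \<ge> 1 \<or> k \<le> -1" by linarith
          then show False
          proof
            assume "k \<ge> 1"
            then have "k * int n \<ge> 1 * int n" by (intro mult_right_mono) auto
            with kn ww show False by simp
          next
            assume "k \<le> -1"
            then have "k * int n \<le> (-1) * int n" by (intro mult_right_mono) auto
            with kn ww show False by simp
          qed
        qed
        with kn show ?thesis by simp
      qed
      moreover have "finite W" by (simp add: W_def)
      ultimately show ?thesis using card_le_Suc0_iff_eq[of W] by simp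
    qed
    have pw3: "max 0 (uB (w+1) + 1 + xs w) \<le> max 0 (uB (w+1) + 1 + xs' w) + (if \<not> Gh m n h (xs w) < - int w then 1 else 0)" for w
      by (auto simp: xs'_def)
    have "(\<Sum>w<n. max 0 (uB (w+1) + 1 + xs w)) \<le> (\<Sum>w<n. max 0 (uB (w+1) + 1 + xs' w) + (if \<not> Gh m n h (xs w) < - int w then 1 else 0))"
      by (rule sum_mono) (rule pw3)
    also have "\<dots> = (\<Sum>w<n. max 0 (uB (w+1) + 1 + xs' w)) + int (card W)"
      by (simp add: sum.distrib sum_ind_card W_def)
    also have "\<dots> \<le> (\<Sum>k=1..n. uB k - h k) + 1" using IH cW by simp
    finally show "(\<Sum>w<n. max 0 (uB (w+1) + 1 + xs w)) \<le> (\<Sum>j=1..n. uB j - h' j)" using sumd by simp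
  qed
qed

end



definition Hs :: "nat \<Rightarrow> int \<Rightarrow> int" where
  "Hs n z = (\<Sum>w<n. (z - int w) div int n)"

lemma Hs_step: "n \<ge> 1 \<Longrightarrow> Hs n (z + 1) = Hs n z + 1"
proof -
  assume "n \<ge> 1"
  then obtain n' where n: "n = Suc n'" by (cases n) auto
  have "Hs n (z + 1) = (z + 1) div int n + (\<Sum>w<n'. (z + 1 - int (Suc w)) div int n)"
    unfolding Hs_def n sum.lessThan_Suc_shift by simp
  also have "(\<Sum>w<n'. (z + 1 - int (Suc w)) div int n) = (\<Sum>w<n'. (z - int w) div int n)" by simp
  also have "Hs n z = (\<Sum>w<n'. (z - int w) div int n) + (z - int n') div int n"
    unfolding Hs_def n by simp
  moreover have "(z + 1) div int n = (z - int n') div int n + 1"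
  proof -
    have "(z + 1) div int n = ((z - int n') + 1 * int n) div int n" using n by simp
    also have "\<dots> = 1 + (z - int n') div int n" using n by (simp only: div_mult_self1)
    finally show ?thesis by simp
  qed
  ultimately show ?thesis by simp
qed

lemma Hs_add: "n \<ge> 1 \<Longrightarrow> Hs n (z + int f) = Hs n z + int f"
proof (induction f)
  case (Suc f)
  have "Hs n (z + int (Suc f)) = Hs n ((z + int f) + 1)" by (simp add: algebra_simps)
  also have "\<dots> = Hs n (z + int f) + 1" using Hs_step Suc.prems by blast
  finally show ?case using Suc by simp
qed simp

lemma Hs_diff: "n \<ge> 1 \<Longrightarrow> 0 \<le> (f::int) \<Longrightarrow> Hs n z - Hs n (z - f) = f"
  using Hs_add[of n "z - f" "nat f"] by simp

lemma FA_sum_diff: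
  assumes "n \<ge> 1" "\<forall>i\<in>{1..m}. f (A i) \<ge> 0"
  shows "(\<Sum>w<n. FA m n u (- int w) - FA m n (\<lambda>z. u z - f z) (- int w)) = (\<Sum>i=1..m. f (A i))"
proof -
  have "(\<Sum>w<n. FA m n u (- int w) - FA m n (\<lambda>z. u z - f z) (- int w))
     = (\<Sum>w<n. \<Sum>i=1..m. (u (A i) - int w) div int n - (u (A i) - f (A i) - int w) div int n)"
    unfolding FA_def by (simp add: sum_subtractf)
  also have "\<dots> = (\<Sum>i=1..m. \<Sum>w<n. (u (A i) - int w) div int n - (u (A i) - f (A i) - int w) div int n)"
    by (rule sum.swap)
  also have "\<dots> = (\<Sum>i=1..m. Hs n (u (A i)) - Hs n (u (A i) - f (A i)))"
    unfolding Hs_def by (simp add: sum_subtractf)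
  also have "\<dots> = (\<Sum>i=1..m. f (A i))"
    by (rule sum.cong) (use Hs_diff assms in auto)
  finally show ?thesis .
qed

lemma FA_exact:
  fixes u :: "vert \<Rightarrow> int"
  assumes m: "m \<ge> 1" and n: "n \<ge> 1"
    and bA: "\<forall>i\<in>{1..m-1}. 0 \<le> u (A i) \<and> u (A i) \<le> int n - 1"
    and sk: "u (A m) + 1 = int n * Q + R" "0 \<le> R" "R < int n"
    and w: "w < n"
  shows "FA m n u (p * int n - int w) = int m * p + Q - (if R \<le> int w then 1 else 0)
           - int (card {i\<in>{1..m-1}. u (A i) < int w})"
proof -
  have "FA m n u (p * int n - int w) = (\<Sum>i=1..m-1. (u (A i) + (p * int n - int w)) div int n)
          + (u (A m) + (p * int n - int w)) div int n"
    unfolding FA_def using sum_last[OF m] by blast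
  also have "(\<Sum>i=1..m-1. (u (A i) + (p * int n - int w)) div int n) = (\<Sum>i=1..m-1. p - (if u (A i) < int w then 1 else 0))"
  proof (rule sum.cong)
    fix i assume i: "i \<in> {1..m-1}"
    have "(u (A i) + (p * int n - int w)) div int n = (u (A i) + p * int n - int w) div int n"
      by (rule arg_cong[where f="\<lambda>t. t div int n"]) simp
    then show "(u (A i) + (p * int n - int w)) div int n = p - (if u (A i) < int w then 1 else 0)"
      using div_small1[of "u (A i)" "int n" "int w" p] bA i w by simp
  qed simp
  also have "\<dots> = int (m - 1) * p - int (card {i\<in>{1..m-1}. u (A i) < int w})"
    by (simp add: sum_subtractf sum_ind_card)
  also have "(u (A m) + (p * int n - int w)) div int n = p + Q - (if R \<le> int w then 1 else 0)"
    using div_sink[of "u (A m)" "int n" Q R "int w" p] sk w by (simp add: algebra_simps)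
  finally show ?thesis using m by (simp add: of_nat_diff algebra_simps)
qed




lemma parking_bounds:
  assumes "parking m n u"
  shows "\<forall>i\<in>{1..m-1}. 0 \<le> u (A i) \<and> u (A i) \<le> int n - 1"
    and "\<forall>j\<in>{1..n}. 0 \<le> u (B j) \<and> u (B j) \<le> int m - 1"
proof -
  have nn: "\<forall>c\<in>Vset m n - {A m}. u c \<ge> 0" using assms by (simp add: parking_def)
  have C: "\<And>C. C \<subseteq> Vset m n - {A m} \<Longrightarrow> C \<noteq> {} \<Longrightarrow> \<exists>x\<in>Vset m n - {A m}. u x - DeltaSet m n C x < 0"
    using assms by (simp add: parking_def)
  show "\<forall>i\<in>{1..m-1}. 0 \<le> u (A i) \<and> u (A i) \<le> int n - 1"
  proof
    fix i assume i: "i \<in> {1..m-1}"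
    have iV: "A i \<in> Vset m n - {A m}" using i by (auto simp: Vset_def)
    obtain x where x: "x \<in> Vset m n - {A m}" "u x - Delta m n (A i) x < 0"
      using C[of "{A i}"] iV by (auto simp: DeltaSet_def)
    have "u (A i) < int n"
    proof -
      from x(1) consider (a) i' where "x = A i'" "i' \<in> {1..m}" | (b) j where "x = B j" "j \<in> {1..n}"
        by (auto simp: Vset_def)
      then show ?thesis
      proof cases
        case a
        show ?thesis
        proof (cases "i' = i")
          case True then show ?thesis using x a by (simp add: Delta_def adj_def)
        next
          case False
          then have "Delta m n (A i) x = 0" using a by (simp add: Delta_def adj_def)
          then show ?thesis using x nn by force
        qed
      next
        case b
        then have "Delta m n (A i) x = -1" using i by (auto simp: Delta_def adj_def)
        then show ?thesis using x nn by force
      qed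
    qed
    then show "0 \<le> u (A i) \<and> u (A i) \<le> int n - 1" using nn iV by force
  qed
  show "\<forall>j\<in>{1..n}. 0 \<le> u (B j) \<and> u (B j) \<le> int m - 1"
  proof
    fix j assume j: "j \<in> {1..n}"
    have jV: "B j \<in> Vset m n - {A m}" using j by (auto simp: Vset_def)
    obtain x where x: "x \<in> Vset m n - {A m}" "u x - Delta m n (B j) x < 0"
      using C[of "{B j}"] jV by (auto simp: DeltaSet_def)
    have "u (B j) < int m"
    proof -
      from x(1) consider (a) i' where "x = A i'" "i' \<in> {1..m}" | (b) j' where "x = B j'" "j' \<in> {1..n}"
        by (auto simp: Vset_def)
      then show ?thesis
      proof cases
        case a
        then have "Delta m n (B j) x = -1" using j by (auto simp: Delta_def adj_def)
        then show ?thesis using x nn by force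
      next
        case b
        show ?thesis
        proof (cases "j' = j")
          case True then show ?thesis using x b by (simp add: Delta_def adj_def)
        next
          case False
          then have "Delta m n (B j) x = 0" using b by (simp add: Delta_def adj_def)
          then show ?thesis using x nn by force
        qed
      qed
    qed
    then show "0 \<le> u (B j) \<and> u (B j) \<le> int m - 1" using nn jV by force
  qed
qed




theorem theorem11p1:
  fixes m n :: nat and u :: "vert \<Rightarrow> int" and Q R :: int
  assumes "m \<ge> 1" and "n \<ge> 1"
    and "parking m n u" and "sorted_conf m n u"
    and "u (A m) \<ge> 0"
    and "u (A m) + 1 = int n * Q + R" and "Q \<ge> 0" and "0 \<le> R" and "R < int n"
  shows "rank m n u + 1 =
    (\<Sum>i = 1..n. max 0 (Q + (if int i \<le> R then 1 else 0) + rvec m n u i - 1))"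
proof -
  note m = assms(1) and n = assms(2) and sk = assms(6,8,9)
  note bA = parking_bounds(1)[OF assms(3)] and bB = parking_bounds(2)[OF assms(3)]
  have srt: "\<forall>i j. 1 \<le> i \<and> i \<le> j \<and> j \<le> n \<longrightarrow> u (B i) \<le> u (B j)"
    using assms(4) by (simp add: sorted_conf_def)
  define alpha where "alpha w = int (card {i\<in>{1..m-1}. u (A i) < int w})" for w :: nat
  define beta where "beta j = int (card {i\<in>{1..m-1}. u (A i) + 1 \<le> int j - 1})" for j :: nat
  define T where "T j = max 0 (Q + (if int j \<le> R then 1 else 0) + rvec m n u j - 1)" for j
  define S where "S = (\<Sum>j=1..n. T j)"
  have rv: "rvec m n u j = u (B j) + 1 - beta j" for j by (simp add: rvec_def beta_def)
  have S0: "S \<ge> 0" unfolding S_def T_def by (intro sum_nonneg) auto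
  have FAex: "FA m n u (p * int n - int w) = int m * p + Q - (if R \<le> int w then 1 else 0) - alpha w"
    if "w < n" for p w
    using FA_exact[OF m n bA sk that] by (simp add: alpha_def)
  define P where "P d = (\<exists>f. (\<forall>x\<in>Vset m n. f x \<ge> 0) \<and> degree m n f = int d
       \<and> \<not> effective m n (\<lambda>x. u x - f x))" for d
  have up: "P (nat S)"
  proof -
    define f0 where "f0 z = (case z of A i \<Rightarrow> 0 | B j \<Rightarrow> T j)" for z
    have f0nn: "\<forall>x\<in>Vset m n. f0 x \<ge> 0" by (auto simp: Vset_def f0_def T_def)
    have degf0: "degree m n f0 = int (nat S)" using S0 by (simp add: degree_def sum_V f0_def S_def)
    define g where "g z = u z - f0 z" for z
    have "\<not> effective m n g"
    proof
      assume "effective m n g"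
      then obtain x y where xy: "x \<le> FA m n g y" "y \<le> Gh m n (\<lambda>j. g (B j)) x"
        using eff_imp m n by blast
      have FAg: "FA m n g y = FA m n u y" unfolding FA_def by (rule sum.cong) (auto simp: g_def f0_def)
      define w where "w = nat ((- y) mod int n)"
      define p where "p = - ((- y) div int n)"
      have mb: "0 \<le> (-y) mod int n" "(-y) mod int n < int n" using n by simp_all
      have wn: "w < n" using mb by (simp add: w_def nat_less_iff)
      have w': "int w = (- y) mod int n" using mb by (simp add: w_def)
      have dm: "(- y) div int n * int n + (- y) mod int n = - y" by (rule div_mult_mod_eq)
      have ypw: "y = p * int n - int w"
      proof -
        have "y = - ((- y) div int n * int n) - (- y) mod int n" using dm by linarith
        then show ?thesis by (simp add: p_def w')
      qed
      define X where "X = int m * p + Q - (if R \<le> int w then 1 else 0) - alpha w"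
      have xX: "x \<le> X" using xy(1) FAg FAex[OF wn, of p] ypw X_def by simp
      have trm: "(g (B j) + X) div int m \<le> p - (if j \<le> w + 1 then 1 else 0)" if j: "j \<in> {1..n}" for j
      proof -
        define N where "N = beta j - (if int j \<le> R then 1 else 0) - (if R \<le> int w then 1 else 0) - alpha w"
        have gB: "g (B j) \<le> beta j - Q - (if int j \<le> R then 1 else 0)"
          by (simp add: g_def f0_def T_def rv)
        have "g (B j) + X \<le> N + p * int m" using gB by (simp add: X_def N_def algebra_simps)
        then have "(g (B j) + X) div int m \<le> (N + p * int m) div int m" by (rule zdiv_mono1) (use m in simp)
        also have "\<dots> = N div int m + p" using m by (simp only: div_mult_self1)
        finally have a: "(g (B j) + X) div int m \<le> N div int m + p" .
        show ?thesis
        proof (cases "j \<le> w + 1")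
          case True
          have "{i\<in>{1..m-1}. u (A i) + 1 \<le> int j - 1} \<subseteq> {i\<in>{1..m-1}. u (A i) < int w}"
            using True by auto
          then have "beta j \<le> alpha w" unfolding alpha_def beta_def by (simp add: card_mono)
          moreover have "(if int j \<le> R then 1 else 0) + (if R \<le> int w then 1 else 0) \<ge> (1::int)"
            using True by auto
          ultimately have "N \<le> -1" by (simp add: N_def)
          then have "N div int m \<le> (-1) div int m" by (rule zdiv_mono1) (use m in simp)
          also have "(-1::int) div int m = -1" using m by (simp add: div_neg1)
          finally show ?thesis using a True by simp
        next
          case False
          have "card {i\<in>{1..m-1}. u (A i) + 1 \<le> int j - 1} \<le> card {1..m-1}" by (rule card_mono) auto
          then have "beta j \<le> int m - 1" using m by (simp add: beta_def)
          moreover have "alpha w \<ge> 0" by (simp add: alpha_def)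
          ultimately have "N \<le> int m - 1" by (simp add: N_def)
          then have "N div int m \<le> (int m - 1) div int m" by (rule zdiv_mono1) (use m in simp)
          also have "(int m - 1) div int m = 0" using m by (simp add: div_pos_pos_trivial)
          finally show ?thesis using a False by simp
        qed
      qed
      have "Gh m n (\<lambda>j. g (B j)) x \<le> Gh m n (\<lambda>j. g (B j)) X" using Gh_mono m xX by blast
      also have "\<dots> \<le> (\<Sum>j=1..n. p - (if j \<le> w + 1 then 1 else 0))"
        unfolding Gh_def by (rule sum_mono) (rule trm)
      also have "\<dots> = int n * p - int (w + 1)"
        using cnt_le[of "w+1" n] wn by (simp add: sum_subtractf)
      finally show False using xy(2) ypw by (simp add: algebra_simps)
    qed
    moreover have eqg: "g = (\<lambda>z. u z - f0 z)" by (rule ext) (simp add: g_def)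
    ultimately have ne: "\<not> effective m n (\<lambda>z. u z - f0 z)" by simp
    show ?thesis unfolding P_def by (rule exI[of _ f0]) (use f0nn degf0 ne in blast)
  qed
  have low: "S \<le> int d" if "P d" for d
  proof -
    obtain f where fnn: "\<forall>x\<in>Vset m n. f x \<ge> 0" and degf: "degree m n f = int d"
      and ne: "\<not> effective m n (\<lambda>x. u x - f x)"
      using \<open>P d\<close> unfolding P_def by blast
    define g where "g z = u z - f z" for z
    have fA: "\<forall>i\<in>{1..m}. f (A i) \<ge> 0" using fnn by (auto simp: Vset_def)
    have fB: "\<forall>j\<in>{1..n}. f (B j) \<ge> 0" using fnn by (auto simp: Vset_def)
    define xs where "xs w = FA m n g (- int w)" for w :: nat
    have G: "\<forall>w<n. Gh m n (\<lambda>j. g (B j)) (xs w) < - int w"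
    proof (intro allI impI)
      fix w assume "w < n"
      show "Gh m n (\<lambda>j. g (B j)) (xs w) < - int w"
      proof (rule ccontr)
        assume "\<not> Gh m n (\<lambda>j. g (B j)) (xs w) < - int w"
        then have "effective m n g" using imp_eff[OF m n, of "xs w" g "- int w"] by (simp add: xs_def)
        moreover have eqg: "g = (\<lambda>z. u z - f z)" by (rule ext) (simp add: g_def)
        ultimately show False using ne by simp
      qed
    qed
    interpret bsetup m n "\<lambda>j. u (B j)"
      by unfold_locales (use m bB srt in auto)
    have B: "(\<Sum>w<n. max 0 (u (B (w+1)) + 1 + xs w)) \<le> (\<Sum>j=1..n. u (B j) - g (B j))"
    proof (rule lemB[of "\<Sum>j=1..n. nat (u (B j) - g (B j))", rule_format])
    qed (use G fB in \<open>auto simp: g_def\<close>)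
    have Asum: "(\<Sum>w<n. FA m n u (- int w) - xs w) = (\<Sum>i=1..m. f (A i))"
      unfolding xs_def g_def using FA_sum_diff[OF n fA] by simp
    have Tw: "T (w+1) \<le> max 0 (u (B (w+1)) + 1 + xs w) + (FA m n u (- int w) - xs w)" if w: "w < n" for w
    proof -
      have Fu: "FA m n u (- int w) = Q - (if R \<le> int w then 1 else 0) - alpha w"
        using FAex[OF w, of 0] by simp
      have ba: "beta (w+1) = alpha w" unfolding alpha_def beta_def
        by (rule arg_cong[where f="\<lambda>X. int (card X)"]) auto
      have T1: "T (w+1) = max 0 (u (B (w+1)) + 1 + FA m n u (- int w))"
        unfolding T_def rv Fu ba by auto
      have "xs w \<le> FA m n u (- int w)" unfolding xs_def FA_def g_def
        by (rule sum_mono) (use fA n in \<open>auto intro!: zdiv_mono1\<close>)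
      then show ?thesis unfolding T1 by simp
    qed
    have "S = (\<Sum>w<n. T (w+1))" unfolding S_def using sum.atLeast1_atMost_eq[of T n] by simp
    also have "\<dots> \<le> (\<Sum>w<n. max 0 (u (B (w+1)) + 1 + xs w) + (FA m n u (- int w) - xs w))"
      by (rule sum_mono) (use Tw in auto)
    also have "\<dots> = (\<Sum>w<n. max 0 (u (B (w+1)) + 1 + xs w)) + (\<Sum>i=1..m. f (A i))"
      using Asum by (simp add: sum.distrib)
    also have "\<dots> \<le> (\<Sum>j=1..n. f (B j)) + (\<Sum>i=1..m. f (A i))" using B by (simp add: g_def)
    also have "\<dots> = int d" using degf by (simp add: degree_def sum_V)
    finally show ?thesis .
  qed
  have L: "(LEAST d. P d) = nat S"
  proof (rule Least_equality)
    show "P (nat S)" by (rule up)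
    show "\<And>d. P d \<Longrightarrow> nat S \<le> d" using low by fastforce
  qed
  have "rank m n u = int (LEAST d. P d) - 1" unfolding rank_def P_def by simp
  then show ?thesis using L S0 by (simp add: S_def T_def)
qed



end
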